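(* Let $a,x\in \mathcal{A}$, $\lambda,\mu\in \mathbb{C}^*$, $ax=\lambda xa$ and $a^*x=\mu xa^*$. If $a\in \mathcal{A}^{\mathrm{gcEP}}$, then $a^{\mathrm{gcEP}}x=\lambda^{-1}xa^{\mathrm{gcEP}}$.
   Context: $\mathcal{A}$ is a complex Banach *-algebra with identity, and $\mathbb{C}^*$ is the set of nonzero complex numbers. An element $a$ has a generalized core-EP inverse if there is $y\in\mathcal{A}$ with $y=ay^2$, $(ay)^*=ay$, $\lim_{n\to\infty}\|a^n-ya^{n+1}\|^{1/n}=0$; such $y$ is unique, denoted $a^{\mathrm{gcEP}}$, and $\mathcal{A}^{\mathrm{gcEP}}$ is the set of such $a$. *)

theory Defs
  imports "HOL-Analysis.Analysis"
begin

text \<open>A complex unital Banach algebra with involution (Banach *-algebra).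
  HOL has no complex vector space class, so complex scalar multiplication
  is added as a parameter compatible with the real one.\<close>

class banach_star_algebra = real_normed_algebra_1 + banach +
  fixes scaleC :: "complex \<Rightarrow> 'a \<Rightarrow> 'a"
    and adj :: "'a \<Rightarrow> 'a"
  assumes scaleC_add_right: "scaleC c (x + y) = scaleC c x + scaleC c y"
    and scaleC_add_left: "scaleC (b + c) x = scaleC b x + scaleC c x"
    and scaleC_scaleC: "scaleC b (scaleC c x) = scaleC (b * c) x"
    and scaleC_one: "scaleC 1 x = x"
    and scaleC_of_real: "scaleC (complex_of_real r) x = scaleR r x"
    and norm_scaleC: "norm (scaleC c x) = cmod c * norm x"
    and mult_scaleC_left: "scaleC c x * y = scaleC c (x * y)"
    and mult_scaleC_right: "x * scaleC c y = scaleC c (x * y)"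
    and adj_adj: "adj (adj x) = x"
    and adj_add: "adj (x + y) = adj x + adj y"
    and adj_scaleC: "adj (scaleC c x) = scaleC (cnj c) (adj x)"
    and adj_mult: "adj (x * y) = adj y * adj x"

definition is_gcEP_inverse :: "'a::banach_star_algebra \<Rightarrow> 'a \<Rightarrow> bool" where
  "is_gcEP_inverse a y \<longleftrightarrow>
     y = a * y * y \<and> adj (a * y) = a * y \<and>
     (\<lambda>n. root n (norm (a ^ n - y * a ^ (Suc n)))) \<longlonglongrightarrow> 0"

definition gcEP_set :: "'a::banach_star_algebra set" where
  "gcEP_set = {a. \<exists>y. is_gcEP_inverse a y}"

definition gcEP :: "'a::banach_star_algebra \<Rightarrow> 'a" where
  "gcEP a = (THE y. is_gcEP_inverse a y)"

end

theory Submission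
  imports Defs
begin

lemma vanish:
  fixes z :: "'a::real_normed_vector"
  assumes e: "(\<lambda>n. root n (e n)) \<longlonglongrightarrow> 0" and f: "(\<lambda>n. root n (f n)) \<longlonglongrightarrow> 0"
    and e0: "\<And>n. e n \<ge> 0" and f0: "\<And>n. f n \<ge> 0"
    and B: "B \<ge> 0" and K: "K \<ge> 0"
    and bnd: "\<And>n. norm z \<le> K * B ^ n * (e n + f n)"
  shows "z = 0"
proof -
  define eps where "eps = 1 / (2 * (B + 1))"
  have eps: "eps > 0" using B by (simp add: eps_def)
  have "eventually (\<lambda>n. root n (e n) < eps) sequentially"
    using order_tendstoD(2)[OF e eps] .
  moreover have "eventually (\<lambda>n. root n (f n) < eps) sequentially"
    using order_tendstoD(2)[OF f eps] .
  moreover have "eventually (\<lambda>n. n \<ge> 1) sequentially" by (rule eventually_ge_at_top)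
  ultimately have ev: "eventually (\<lambda>n. norm z \<le> 2 * K * (1/2) ^ n) sequentially"
  proof eventually_elim
    case (elim n)
    have en: "e n \<le> eps ^ n"
    proof -
      have "e n = root n (e n) ^ n" using elim e0[of n] by (simp add: real_root_pow_pos2)
      also have "\<dots> \<le> eps ^ n" using elim by (intro power_mono) (auto simp: e0)
      finally show ?thesis .
    qed
    have fn: "f n \<le> eps ^ n"
    proof -
      have "f n = root n (f n) ^ n" using elim f0[of n] by (simp add: real_root_pow_pos2)
      also have "\<dots> \<le> eps ^ n" using elim by (intro power_mono) (auto simp: f0)
      finally show ?thesis .
    qed
    have Be: "B * eps \<le> 1/2" using B by (simp add: eps_def field_simps)
    have "norm z \<le> K * B ^ n * (e n + f n)" by (rule bnd)
    also have "\<dots> \<le> K * B ^ n * (2 * eps ^ n)"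
      using en fn K B by (intro mult_left_mono) auto
    also have "\<dots> = 2 * K * (B * eps) ^ n" by (simp add: power_mult_distrib)
    also have "\<dots> \<le> 2 * K * (1/2) ^ n"
      using Be B eps K by (intro mult_left_mono power_mono) auto
    finally show ?case .
  qed
  have lim: "(\<lambda>n. 2 * K * (1/2::real) ^ n) \<longlonglongrightarrow> 0"
    by (intro tendsto_mult_right_zero LIMSEQ_power_zero) auto
  have "norm z \<le> 0"
    using tendsto_le[OF trivial_limit_sequentially lim tendsto_const ev] .
  then show ?thesis by simp
qed

lemma scaleC_zero: "scaleC c (0::'a::banach_star_algebra) = 0"
  using scaleC_add_right[of c "0::'a" 0] by simp

lemma scaleC_diff: "scaleC c (u - v::'a::banach_star_algebra) = scaleC c u - scaleC c v"
proof -
  have "scaleC c (u - v) + scaleC c v = scaleC c u"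
    using scaleC_add_right[of c "u - v" v] by simp
  then show ?thesis by (simp add: eq_diff_eq)
qed

lemma adj_zero: "adj (0::'a::banach_star_algebra) = 0"
  using adj_add[of "0::'a" 0] by simp

lemma adj_inj: "adj (u::'a::banach_star_algebra) = adj v \<Longrightarrow> u = v"
  by (metis adj_adj)

lemma pcomm: "(a::'a::monoid_mult) * (a ^ n * z) = a ^ n * (a * z)"
  by (simp add: power_commutes flip: mult.assoc)

lemma comm_pow:
  fixes u a :: "'a::banach_star_algebra"
  assumes "u * a = scaleC c (a * u)"
  shows "u * a ^ n = scaleC (c ^ n) (a ^ n * u)"
proof (induction n)
  case 0 then show ?case by (simp add: scaleC_one)
next
  case (Suc n)
  have "u * a ^ Suc n = (u * a ^ n) * a" by (simp only: power_Suc2 mult.assoc)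
  also have "\<dots> = scaleC (c ^ n) (a ^ n * (u * a))"
    by (simp add: Suc mult_scaleC_left mult.assoc)
  also have "\<dots> = scaleC (c ^ Suc n) (a ^ Suc n * u)"
    by (simp add: assms mult_scaleC_right scaleC_scaleC power_Suc2 mult.assoc mult.commute pcomm)
  finally show ?case .
qed

lemma pow_y:
  fixes a y :: "'a::banach_star_algebra"
  assumes "y = a * y * y"
  shows "y = a ^ n * y ^ Suc n"
proof (induction n)
  case 0 then show ?case by simp
next
  case (Suc n)
  have "a ^ Suc n * y ^ Suc (Suc n) = a ^ n * ((a * y * y) * y ^ n)"
    by (simp add: mult.assoc pcomm)
  also have "\<dots> = a ^ n * y ^ Suc n" by (simp only: power_Suc flip: assms)
  also have "\<dots> = y" using Suc by simp
  finally show ?case by simp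
qed

lemma pow_ay:
  fixes a y :: "'a::banach_star_algebra"
  assumes "y = a * y * y"
  shows "a * y = a ^ Suc n * y ^ Suc n"
proof -
  have "a * y = a * (a ^ n * y ^ Suc n)" using pow_y[OF assms, of n] by simp
  then show ?thesis by (simp add: mult.assoc)
qed

lemma nbound3: "norm ((u::'a::real_normed_algebra_1) * v * w) \<le> norm u * norm v * norm w"
  by (metis mult_right_mono norm_ge_zero norm_mult_ineq order_trans)

lemma gcEP_props:
  fixes a y :: "'a::banach_star_algebra"
  assumes "is_gcEP_inverse a y"
  shows "y = a * y * y" "adj (a * y) = a * y"
    "(\<lambda>n. root n (norm (a ^ n - y * a ^ (Suc n)))) \<longlonglongrightarrow> 0"
  using assms unfolding is_gcEP_inverse_def by auto

lemma yay:
  fixes a y :: "'a::banach_star_algebra"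
  assumes "is_gcEP_inverse a y"
  shows "y * a * y = y"
proof -
  note P = gcEP_props[OF assms]
  have "y - y * a * y = 0"
  proof (rule vanish[OF P(3) P(3)])
    fix n
    have "y - y * a * y = (a ^ n - y * a ^ Suc n) * y ^ Suc n"
    proof -
      have "y * a * y = y * a ^ Suc n * y ^ Suc n"
        using pow_y[OF P(1), of n] by (metis mult.assoc power_Suc)
      then have "y - y * a * y = a ^ n * y ^ Suc n - y * a ^ Suc n * y ^ Suc n"
        using pow_y[OF P(1), of n] by simp
      then show ?thesis by (simp add: left_diff_distrib)
    qed
    also have "norm \<dots> \<le> norm (a ^ n - y * a ^ Suc n) * norm (y ^ Suc n)"
      by (rule norm_mult_ineq)
    also have "\<dots> \<le> norm (a ^ n - y * a ^ Suc n) * (norm y ^ Suc n)"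
      by (intro mult_left_mono norm_power_ineq) auto
    also have "\<dots> \<le> norm y * norm y ^ n *
       (norm (a ^ n - y * a ^ Suc n) + norm (a ^ n - y * a ^ Suc n))"
      by (simp add: algebra_simps)
    finally show "norm (y - y * a * y) \<le> norm y * norm y ^ n *
       (norm (a ^ n - y * a ^ Suc n) + norm (a ^ n - y * a ^ Suc n))" .
  qed auto
  then show ?thesis by simp
qed

lemma projA:
  fixes a y z :: "'a::banach_star_algebra"
  assumes Y: "is_gcEP_inverse a y" and Z: "is_gcEP_inverse a z"
  shows "a * y = a * z * (a * y)"
proof -
  note PY = gcEP_props[OF Y] and PZ = gcEP_props[OF Z]
  have "a * y - a * z * (a * y) = 0"
  proof (rule vanish[OF PZ(3) PZ(3)])
    fix n
    let ?E = "norm (a ^ n - z * a ^ Suc n)"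
    have "a * y - a * z * (a * y) = a * (a ^ n - z * a ^ Suc n) * y ^ Suc n"
      using pow_ay[OF PY(1), of n]
      by (simp add: algebra_simps power_Suc)
    also have "norm \<dots> \<le> norm a * ?E * norm (y ^ Suc n)" by (rule nbound3)
    also have "\<dots> \<le> norm a * ?E * norm y ^ Suc n"
      by (intro mult_left_mono norm_power_ineq) auto
    also have "\<dots> \<le> norm a * norm y * norm y ^ n * (?E + ?E)"
      by (simp add: algebra_simps)
    finally show "norm (a * y - a * z * (a * y)) \<le> norm a * norm y * norm y ^ n * (?E + ?E)" .
  qed auto
  then show ?thesis by simp
qed

lemma gcEP_unique:
  fixes a y z :: "'a::banach_star_algebra"
  assumes Y: "is_gcEP_inverse a y" and Z: "is_gcEP_inverse a z"
  shows "y = z"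
proof -
  note PY = gcEP_props[OF Y] and PZ = gcEP_props[OF Z]
  have 1: "a * y = a * z * (a * y)" by (rule projA[OF Y Z])
  have 2: "a * z = a * y * (a * z)" by (rule projA[OF Z Y])
  have "a * y = adj (a * y)" using PY(2) by simp
  also have "\<dots> = adj (a * y) * adj (a * z)" by (subst 1) (simp add: adj_mult)
  also have "\<dots> = a * y * (a * z)" using PY(2) PZ(2) by simp
  also have "\<dots> = a * z" using 2 by simp
  finally have p: "a * y = a * z" .
  have yy: "y = y * (a * y)" using yay[OF Y] by (simp add: mult.assoc)
  have zz: "z = z * (a * y)" using yay[OF Z] p by (simp add: mult.assoc)
  have "y - z = 0"
  proof (rule vanish[OF PY(3) PZ(3)])
    fix n
    let ?E = "norm (a ^ n - y * a ^ Suc n)" and ?F = "norm (a ^ n - z * a ^ Suc n)"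
    have "y - z = (y - z) * (a * y)" using yy zz by (simp add: algebra_simps)
    also have "\<dots> = ((a ^ n - z * a ^ Suc n) - (a ^ n - y * a ^ Suc n)) * y ^ Suc n"
      using pow_ay[OF PY(1), of n] by (simp add: algebra_simps)
    also have "norm \<dots> \<le> norm ((a ^ n - z * a ^ Suc n) - (a ^ n - y * a ^ Suc n)) * norm (y ^ Suc n)"
      by (rule norm_mult_ineq)
    also have "\<dots> \<le> (?F + ?E) * norm y ^ Suc n"
      by (intro mult_mono norm_triangle_ineq4 norm_power_ineq) auto
    also have "\<dots> = norm y * norm y ^ n * (?E + ?F)" by (simp add: algebra_simps)
    finally show "norm (y - z) \<le> norm y * norm y ^ n * (?E + ?F)" .
  qed auto
  then show ?thesis by simp
qed

theorem lemma3p2: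
  fixes a x :: "'a::banach_star_algebra" and l m :: complex
  assumes "l \<noteq> 0" and "m \<noteq> 0"
    and "a * x = scaleC l (x * a)"
    and "adj a * x = scaleC m (x * adj a)"
    and "a \<in> gcEP_set"
  shows "gcEP a * x = scaleC (inverse l) (x * gcEP a)"
proof -
  from assms(5) obtain y where Y: "is_gcEP_inverse a y" unfolding gcEP_set_def by auto
  have gy: "gcEP a = y" unfolding gcEP_def
    by (rule the_equality[where P="is_gcEP_inverse a", OF Y]) (rule gcEP_unique[OF _ Y])
  note PY = gcEP_props[OF Y]
  define c where "c = inverse l"
  have xa: "x * a = scaleC c (a * x)"
    using assms(1,3) by (simp add: c_def scaleC_scaleC scaleC_one)
  have xpow: "x * a ^ n = scaleC (c ^ n) (a ^ n * x)" for n by (rule comm_pow[OF xa])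
  define d where "d = cnj m"
  have xa': "adj x * a = scaleC d (a * adj x)"
  proof -
    have "adj (adj a * x) = adj (scaleC m (x * adj a))" using assms(4) by simp
    then show ?thesis by (simp add: adj_mult adj_scaleC adj_adj d_def)
  qed
  have xpow': "adj x * a ^ n = scaleC (d ^ n) (a ^ n * adj x)" for n by (rule comm_pow[OF xa'])
  have S1: "x * y = y * a * x * y"
  proof -
    have "x * y - y * a * x * y = 0"
    proof (rule vanish[OF PY(3) PY(3)])
      fix n
      let ?E = "norm (a ^ n - y * a ^ Suc n)"
      have e1: "x * y = scaleC (c ^ n) (a ^ n * x * y ^ Suc n)"
        using pow_y[OF PY(1), of n] xpow[of n]
        by (metis mult.assoc mult_scaleC_left)
      have e2: "y * a * x * y = scaleC (c ^ n) (y * a ^ Suc n * x * y ^ Suc n)"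
        by (subst mult.assoc, subst e1) (simp add: mult_scaleC_right mult.assoc power_Suc)
      have "x * y - y * a * x * y = scaleC (c ^ n) ((a ^ n - y * a ^ Suc n) * x * y ^ Suc n)"
        unfolding e1 e2 scaleC_diff[symmetric] by (simp add: algebra_simps)
      also have "norm \<dots> = cmod c ^ n * norm ((a ^ n - y * a ^ Suc n) * x * y ^ Suc n)"
        by (simp add: norm_scaleC norm_power)
      also have "\<dots> \<le> cmod c ^ n * (?E * norm x * norm (y ^ Suc n))"
        by (intro mult_left_mono nbound3) auto
      also have "\<dots> \<le> cmod c ^ n * (?E * norm x * norm y ^ Suc n)"
        by (intro mult_left_mono norm_power_ineq) auto
      also have "\<dots> \<le> norm x * norm y * (cmod c * norm y) ^ n * (?E + ?E)"
        by (simp add: algebra_simps power_mult_distrib)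
      finally show "norm (x * y - y * a * x * y) \<le> norm x * norm y * (cmod c * norm y) ^ n * (?E + ?E)" .
    qed auto
    then show ?thesis by simp
  qed
  have ay_adj: "adj y = a * y * adj y"
  proof -
    have "adj y = adj (y * (a * y))" using yay[OF Y] by (simp add: mult.assoc)
    also have "\<dots> = a * y * adj y" using PY(2) by (simp add: adj_mult)
    finally show ?thesis .
  qed
  have S2: "adj x * adj y = a * y * (adj x * adj y)"
  proof -
    have "adj x * adj y - a * y * (adj x * adj y) = 0"
    proof (rule vanish[OF PY(3) PY(3)])
      fix n
      let ?E = "norm (a ^ n - y * a ^ Suc n)"
      have e1: "adj x * adj y = scaleC (d ^ Suc n) (a ^ Suc n * adj x * (y ^ Suc n * adj y))"
      proof -
        have "adj x * adj y = adj x * a ^ Suc n * (y ^ Suc n * adj y)"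
          using ay_adj pow_ay[OF PY(1), of n] by (metis mult.assoc)
        then show ?thesis using xpow'[of "Suc n"] by (simp add: mult_scaleC_left)
      qed
      have e2: "a * y * (adj x * adj y) = scaleC (d ^ Suc n) (a * y * a ^ Suc n * adj x * (y ^ Suc n * adj y))"
        by (subst e1) (simp add: mult_scaleC_right mult.assoc)
      have "adj x * adj y - a * y * (adj x * adj y) =
          scaleC (d ^ Suc n) (a * (a ^ n - y * a ^ Suc n) * (adj x * y ^ Suc n * adj y))"
        unfolding e2 unfolding e1 scaleC_diff[symmetric] by (simp add: algebra_simps power_Suc)
      also have "norm \<dots> = cmod d ^ Suc n * norm (a * (a ^ n - y * a ^ Suc n) * (adj x * y ^ Suc n * adj y))"
        by (simp only: norm_scaleC norm_power)
      also have "\<dots> \<le> cmod d ^ Suc n * (norm a * ?E * norm (adj x * y ^ Suc n * adj y))"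
        by (intro mult_left_mono nbound3) auto
      also have "\<dots> \<le> cmod d ^ Suc n * (norm a * ?E * (norm (adj x) * norm (y ^ Suc n) * norm (adj y)))"
        by (intro mult_left_mono nbound3) auto
      also have "\<dots> \<le> cmod d ^ Suc n * (norm a * ?E * (norm (adj x) * norm y ^ Suc n * norm (adj y)))"
        by (intro mult_left_mono mult_right_mono norm_power_ineq) auto
      also have "\<dots> \<le> cmod d * norm a * norm (adj x) * norm y * norm (adj y) * (cmod d * norm y) ^ n * (?E + ?E)"
        by (simp add: algebra_simps power_mult_distrib)
      finally show "norm (adj x * adj y - a * y * (adj x * adj y)) \<le>
        cmod d * norm a * norm (adj x) * norm y * norm (adj y) * (cmod d * norm y) ^ n * (?E + ?E)" .
    qed auto
    then show ?thesis by simp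
  qed
  have S3: "y * x = y * x * (a * y)"
  proof (rule adj_inj)
    show "adj (y * x) = adj (y * x * (a * y))"
      using S2 PY(2) by (simp add: adj_mult)
  qed
  have "y * x = y * (x * a) * y" using S3 by (simp add: mult.assoc)
  also have "\<dots> = scaleC c (y * a * x * y)"
    by (simp add: xa mult_scaleC_left mult_scaleC_right mult.assoc)
  also have "\<dots> = scaleC c (x * y)" using S1 by simp
  finally show ?thesis by (simp add: gy c_def)
qed

end
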